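(* For every $n\ge5$, the quasisymmetric functions $F(T)$, where $T$ ranges over the (pairwise non-isomorphic) unlabelled rooted trees on $n$ vertices, are linearly dependent.
   Context: For a rooted tree $T$, a $T$-partition is a function $f$ from the vertices to $\mathbb{N}=\{1,2,\dots\}$ with $f(u)<f(w)$ whenever $w$ is the parent of $u$, and $F(T)=\sum_f\prod_u x_{f(u)}$ over all $T$-partitions, a quasisymmetric formal power series in $x_1,x_2,\dots$ depending only on the isomorphism class of $T$. *)

theory Defs
  imports Complex_Main "HOL-Library.FuncSet"
begin

text \<open>A rooted tree on n vertices is encoded on the vertex set {0..<n}, with root 0,
  by a parent function p with p i < i for every non-root vertex i.  Every finite rooted
  tree admits such a labelling (e.g. breadth-first order).  Values of p outside the
  non-root vertices are normalised to 0 so that the encoding is unique.\<close>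

definition rtrees :: "nat \<Rightarrow> (nat \<Rightarrow> nat) set" where
  "rtrees n = {p. 1 \<le> n \<and> (\<forall>i. 0 < i \<and> i < n \<longrightarrow> p i < i)
                 \<and> (\<forall>i. (i = 0 \<or> n \<le> i) \<longrightarrow> p i = 0)}"

definition tree_iso :: "nat \<Rightarrow> (nat \<Rightarrow> nat) \<Rightarrow> (nat \<Rightarrow> nat) \<Rightarrow> bool" where
  "tree_iso n p q \<longleftrightarrow> (\<exists>\<sigma>. bij_betw \<sigma> {0..<n} {0..<n} \<and> \<sigma> 0 = 0 \<and>
      (\<forall>i. 0 < i \<and> i < n \<longrightarrow> q (\<sigma> i) = \<sigma> (p i)))"

definition iso_rel :: "nat \<Rightarrow> ((nat \<Rightarrow> nat) \<times> (nat \<Rightarrow> nat)) set" where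
  "iso_rel n = {(p, q). p \<in> rtrees n \<and> q \<in> rtrees n \<and> tree_iso n p q}"

definition tree_classes :: "nat \<Rightarrow> (nat \<Rightarrow> nat) set set" where
  "tree_classes n = rtrees n // iso_rel n"

definition tpartition :: "nat \<Rightarrow> (nat \<Rightarrow> nat) \<Rightarrow> (nat \<Rightarrow> nat) \<Rightarrow> bool" where
  "tpartition n p f \<longleftrightarrow> (\<forall>u<n. 1 \<le> f u) \<and> (\<forall>u. 0 < u \<and> u < n \<longrightarrow> f u < f (p u))"

text \<open>Coefficient of the monomial x^alpha = prod_k x_k^(alpha k) in F(T):
  the number of T-partitions f with prod_u x_(f u) = x^alpha.\<close>

definition Fcoeff :: "nat \<Rightarrow> (nat \<Rightarrow> nat) \<Rightarrow> (nat \<Rightarrow> nat) \<Rightarrow> nat" where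
  "Fcoeff n p \<alpha> = card {f \<in> {0..<n} \<rightarrow>\<^sub>E UNIV. tpartition n p f \<and>
                         (\<forall>k. card {u \<in> {0..<n}. f u = k} = \<alpha> k)}"

text \<open>F of an isomorphism class (F depends only on the class; we pick a representative).\<close>

definition Fclass :: "nat \<Rightarrow> (nat \<Rightarrow> nat) set \<Rightarrow> (nat \<Rightarrow> nat) \<Rightarrow> nat" where
  "Fclass n C = Fcoeff n (SOME p. p \<in> C)"

end

theory Submission
  imports Defs
begin


lemma lin_dep:
  fixes a :: "'e \<Rightarrow> 'i \<Rightarrow> rat"
  assumes "finite E" "finite I" "card E < card I"
  shows "\<exists>c. (\<exists>i\<in>I. c i \<noteq> 0) \<and> (\<forall>e\<in>E. (\<Sum>i\<in>I. c i * a e i) = 0)"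
  using assms
proof (induction E arbitrary: I a rule: finite_induct)
  case empty
  then have "I \<noteq> {}" by auto
  then obtain i where "i \<in> I" by blast
  then show ?case by (intro exI[of _ "\<lambda>_. 1"]) auto
next
  case (insert e E)
  show ?case
  proof (cases "\<forall>i\<in>I. a e i = 0")
    case True
    have "card E < card I" using insert by simp
    then obtain c where c: "\<exists>i\<in>I. c i \<noteq> 0" "\<forall>e'\<in>E. (\<Sum>i\<in>I. c i * a e' i) = 0"
      using insert.IH[of I a] insert.prems by auto
    then show ?thesis using True by (intro exI[of _ c]) auto
  next
    case False
    then obtain i0 where i0: "i0 \<in> I" "a e i0 \<noteq> 0" by auto
    define I' where "I' = I - {i0}"
    define a' where "a' = (\<lambda>e' j. a e' j - a e' i0 * a e j / a e i0)"
    have "card E < card I'" using insert i0 by (simp add: I'_def)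
    moreover have "finite I'" using insert by (simp add: I'_def)
    ultimately obtain c' where c': "\<exists>i\<in>I'. c' i \<noteq> 0" "\<forall>e'\<in>E. (\<Sum>i\<in>I'. c' i * a' e' i) = 0"
      using insert.IH[of I' a'] by auto
    define S where "S = (\<Sum>j\<in>I'. c' j * a e j)"
    define c where "c = (\<lambda>j. if j = i0 then - S / a e i0 else c' j)"
    have split: "\<And>g. (\<Sum>i\<in>I. g i) = g i0 + (\<Sum>i\<in>I'. g i)"
      using i0 insert.prems by (simp add: I'_def sum.remove)
    have cI': "\<And>g. (\<Sum>i\<in>I'. c i * g i) = (\<Sum>i\<in>I'. c' i * g i)"
      by (rule sum.cong) (auto simp: c_def I'_def)
    show ?thesis
    proof (intro exI[of _ c] conjI ballI)
      from c'(1) obtain j where "j \<in> I'" "c' j \<noteq> 0" by auto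
      then show "\<exists>i\<in>I. c i \<noteq> 0" by (intro bexI[of _ j]) (auto simp: c_def I'_def)
    next
      fix e' assume "e' \<in> insert e E"
      then show "(\<Sum>i\<in>I. c i * a e' i) = 0"
      proof
        assume "e' = e"
        then show ?thesis using i0 by (simp add: split cI' S_def[symmetric]) (simp add: c_def)
      next
        assume "e' \<in> E"
        then have z: "(\<Sum>j\<in>I'. c' j * a' e' j) = 0" using c' by auto
        have "(\<Sum>j\<in>I'. c' j * a' e' j) = (\<Sum>j\<in>I'. c' j * a e' j) - a e' i0 / a e i0 * S"
          by (simp add: a'_def S_def right_diff_distrib sum_subtractf sum_distrib_left mult_ac)
        moreover have "(\<Sum>i\<in>I. c i * a e' i) = c i0 * a e' i0 + (\<Sum>i\<in>I'. c' i * a e' i)"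
          by (simp add: split cI')
        ultimately show ?thesis using z i0 by (simp add: c_def)
      qed
    qed
  qed
qed



definition Aset :: "nat \<Rightarrow> (nat \<Rightarrow> nat) \<Rightarrow> (nat \<Rightarrow> nat) \<Rightarrow> (nat \<Rightarrow> nat) set" where
  "Aset n p \<alpha> = {f \<in> {0..<n} \<rightarrow>\<^sub>E UNIV. tpartition n p f \<and>
                         (\<forall>k. card {u \<in> {0..<n}. f u = k} = \<alpha> k)}"

lemma Fcoeff_Aset: "Fcoeff n p \<alpha> = card (Aset n p \<alpha>)"
  by (simp add: Fcoeff_def Aset_def)

lemma rtreesD:
  assumes "p \<in> rtrees n"
  shows "1 \<le> n" "\<And>i. 0 < i \<Longrightarrow> i < n \<Longrightarrow> p i < i" "p 0 = 0" "\<And>i. i < n \<Longrightarrow> p i < n"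
proof -
  show "1 \<le> n" "\<And>i. 0 < i \<Longrightarrow> i < n \<Longrightarrow> p i < i" "p 0 = 0" using assms by (auto simp: rtrees_def)
  then show "\<And>i. i < n \<Longrightarrow> p i < n"
    by (metis gr0I less_trans)
qed

lemma below_root:
  assumes "p \<in> rtrees N" "tpartition N p f" "0 < u" "u < N"
  shows "f u < f 0"
  using assms(3,4)
proof (induction u rule: less_induct)
  case (less u)
  have pu: "p u < u" using rtreesD(2)[OF assms(1)] less.prems by auto
  have fu: "f u < f (p u)" using assms(2) less.prems by (auto simp: tpartition_def)
  show ?case
  proof (cases "p u = 0")
    case True then show ?thesis using fu by simp
  next
    case False
    then have "f (p u) < f 0" using less.IH[of "p u"] pu less.prems by auto
    then show ?thesis using fu by simp
  qed
qed

lemma root_content: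
  assumes "p \<in> rtrees N" "f \<in> Aset N p \<alpha>"
  shows "\<alpha> (f 0) = 1" "\<And>k. f 0 < k \<Longrightarrow> \<alpha> k = 0"
proof -
  have tp: "tpartition N p f" and c: "\<And>k. card {u \<in> {0..<N}. f u = k} = \<alpha> k"
    using assms(2) by (auto simp: Aset_def)
  have N: "1 \<le> N" using rtreesD(1)[OF assms(1)] .
  have "{u \<in> {0..<N}. f u = f 0} = {0}"
  proof (rule set_eqI)
    fix u show "u \<in> {u \<in> {0..<N}. f u = f 0} \<longleftrightarrow> u \<in> {0}"
      using below_root[OF assms(1) tp, of u] N by (cases "u = 0") auto
  qed
  then show "\<alpha> (f 0) = 1" using c[of "f 0"] by simp
  fix k assume "f 0 < k"
  have e: "{u \<in> {0..<N}. f u = k} = {}"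
  proof -
    have "f u \<le> f 0" if "u < N" for u
      using below_root[OF assms(1) tp, of u] that by (cases "u = 0") auto
    then show ?thesis using \<open>f 0 < k\<close> by fastforce
  qed
  show "\<alpha> k = 0" using c[of k] unfolding e by simp
qed

lemma Aset_alpha0:
  assumes "f \<in> Aset N p \<alpha>"
  shows "\<alpha> 0 = 0"
proof -
  have tp: "tpartition N p f" and c: "\<And>k. card {u \<in> {0..<N}. f u = k} = \<alpha> k"
    using assms by (auto simp: Aset_def)
  have "\<And>u. u < N \<Longrightarrow> 1 \<le> f u" using tp by (simp add: tpartition_def)
  then have e: "{u \<in> {0..<N}. f u = 0} = {}" by fastforce
  show ?thesis using c[of 0] unfolding e by simp
qed

definition iso_wit :: "nat \<Rightarrow> (nat \<Rightarrow> nat) \<Rightarrow> (nat \<Rightarrow> nat) \<Rightarrow> (nat \<Rightarrow> nat) \<Rightarrow> bool" where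
  "iso_wit n p q \<sigma> \<longleftrightarrow> bij_betw \<sigma> {0..<n} {0..<n} \<and> \<sigma> 0 = 0 \<and>
      (\<forall>i. 0 < i \<and> i < n \<longrightarrow> q (\<sigma> i) = \<sigma> (p i))"

lemma tree_iso_wit: "tree_iso n p q \<longleftrightarrow> (\<exists>\<sigma>. iso_wit n p q \<sigma>)"
  by (simp add: tree_iso_def iso_wit_def)

lemma wit_nonzero:
  assumes "iso_wit n p q \<sigma>" "0 < i" "i < n"
  shows "0 < \<sigma> i" "\<sigma> i < n"
proof -
  have b: "bij_betw \<sigma> {0..<n} {0..<n}" "\<sigma> 0 = 0" using assms by (auto simp: iso_wit_def)
  then show "\<sigma> i < n" using assms by (auto dest: bij_betwE)
  have "inj_on \<sigma> {0..<n}" using b bij_betw_def by blast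
  then have "\<sigma> i \<noteq> \<sigma> 0" using assms by (auto dest: inj_onD)
  then show "0 < \<sigma> i" using b by simp
qed

lemma wit_inv:
  assumes "p \<in> rtrees n" "iso_wit n p q \<sigma>"
  shows "iso_wit n q p (inv_into {0..<n} \<sigma>)"
proof -
  let ?t = "inv_into {0..<n} \<sigma>"
  have b: "bij_betw \<sigma> {0..<n} {0..<n}" and s0: "\<sigma> 0 = 0"
    and cm: "\<And>i. 0 < i \<Longrightarrow> i < n \<Longrightarrow> q (\<sigma> i) = \<sigma> (p i)" using assms by (auto simp: iso_wit_def)
  have n: "0 < n" using rtreesD(1)[OF assms(1)] by simp
  have inj: "inj_on \<sigma> {0..<n}" using b bij_betw_def by blast
  have t0: "?t 0 = 0" using inv_into_f_f[OF inj, of 0] n s0 by simp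
  have bt: "bij_betw ?t {0..<n} {0..<n}" using bij_betw_inv_into[OF b] .
  have h1: "q v = \<sigma> (p (?t v))" if "0 < v" "v < n" for v
  proof -
    have vi: "v \<in> \<sigma> ` {0..<n}" using b that by (simp add: bij_betw_def)
    have u: "?t v \<in> {0..<n}" "\<sigma> (?t v) = v"
      using inv_into_into[OF vi] f_inv_into_f[OF vi] by auto
    have "?t v \<noteq> 0" using u(2) s0 that by (metis less_irrefl)
    then show ?thesis using cm[of "?t v"] u by auto
  qed
  have h2: "?t (\<sigma> x) = x" if "x < n" for x using inv_into_f_f[OF inj] that by simp
  have "p (?t v) = ?t (q v)" if "0 < v" "v < n" for v
  proof -
    have "?t v < n" using bij_betwE[OF bt] that by auto
    then show ?thesis using h1 h2 that rtreesD(4)[OF assms(1)] by simp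
  qed
  then show ?thesis using bt t0 by (auto simp: iso_wit_def)
qed




lemma wit_Aset:
  assumes "p \<in> rtrees n" "iso_wit n p q \<sigma>" "g \<in> Aset n q \<alpha>"
  shows "restrict (g \<circ> \<sigma>) {0..<n} \<in> Aset n p \<alpha>"
proof -
  have b: "bij_betw \<sigma> {0..<n} {0..<n}" and s0: "\<sigma> 0 = 0"
    and cm: "\<And>i. 0 < i \<Longrightarrow> i < n \<Longrightarrow> q (\<sigma> i) = \<sigma> (p i)" using assms by (auto simp: iso_wit_def)
  have g: "tpartition n q g" "\<And>k. card {u \<in> {0..<n}. g u = k} = \<alpha> k" using assms(3) by (auto simp: Aset_def)
  have sn: "\<And>u. u < n \<Longrightarrow> \<sigma> u < n" using bij_betwE[OF b] by auto
  have tp: "tpartition n p (restrict (g \<circ> \<sigma>) {0..<n})"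
    unfolding tpartition_def
  proof (intro conjI allI impI)
    fix u assume "u < n"
    then show "1 \<le> restrict (g \<circ> \<sigma>) {0..<n} u" using g(1) sn[of u] by (auto simp: tpartition_def)
  next
    fix u assume u: "0 < u \<and> u < n"
    have pu: "p u < n" using u rtreesD(4)[OF assms(1)] by auto
    have "g (\<sigma> u) < g (q (\<sigma> u))" using g(1) wit_nonzero[OF assms(2), of u] u
      by (auto simp: tpartition_def)
    then show "restrict (g \<circ> \<sigma>) {0..<n} u < restrict (g \<circ> \<sigma>) {0..<n} (p u)"
      using cm[of u] u pu by auto
  qed
  have "card {u \<in> {0..<n}. restrict (g \<circ> \<sigma>) {0..<n} u = k} = \<alpha> k" for k
  proof -
    have "{u \<in> {0..<n}. restrict (g \<circ> \<sigma>) {0..<n} u = k} = {u \<in> {0..<n}. g (\<sigma> u) = k}" by auto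
    moreover have "\<sigma> ` {u \<in> {0..<n}. g (\<sigma> u) = k} = {v \<in> {0..<n}. g v = k}"
    proof -
      have "\<sigma> ` {0..<n} = {0..<n}" using b by (simp add: bij_betw_def)
      show ?thesis
      proof (intro set_eqI iffI)
        fix v assume "v \<in> {v \<in> {0..<n}. g v = k}"
        then obtain u where "u \<in> {0..<n}" "v = \<sigma> u" using \<open>\<sigma> ` {0..<n} = {0..<n}\<close> by blast
        then show "v \<in> \<sigma> ` {u \<in> {0..<n}. g (\<sigma> u) = k}" using \<open>v \<in> _\<close> by blast
      next
        fix v assume "v \<in> \<sigma> ` {u \<in> {0..<n}. g (\<sigma> u) = k}"
        then show "v \<in> {v \<in> {0..<n}. g v = k}" using sn by auto
      qed
    qed
    moreover have "inj_on \<sigma> {u \<in> {0..<n}. g (\<sigma> u) = k}"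
    proof (rule inj_on_subset)
      show "inj_on \<sigma> {0..<n}" using b by (simp add: bij_betw_def)
    qed auto
    ultimately show ?thesis using g(2)[of k] card_image[of \<sigma> "{u \<in> {0..<n}. g (\<sigma> u) = k}"] by simp
  qed
  then show ?thesis using tp by (auto simp: Aset_def)
qed

lemma Fcoeff_iso:
  assumes "p \<in> rtrees n" "q \<in> rtrees n" "tree_iso n p q"
  shows "Fcoeff n p \<alpha> = Fcoeff n q \<alpha>"
proof -
  obtain \<sigma> where s: "iso_wit n p q \<sigma>" using assms(3) tree_iso_wit by blast
  let ?t = "inv_into {0..<n} \<sigma>"
  have t: "iso_wit n q p ?t" using wit_inv[OF assms(1) s] .
  have b: "bij_betw \<sigma> {0..<n} {0..<n}" using s by (simp add: iso_wit_def)
  have st: "\<sigma> (?t v) = v" if "v < n" for v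
    using b that by (simp add: bij_betw_def f_inv_into_f)
  have ts: "?t (\<sigma> v) = v" if "v < n" for v
    using b that by (simp add: bij_betw_def inv_into_f_f)
  have sn: "\<And>u. u < n \<Longrightarrow> \<sigma> u < n" using bij_betwE[OF b] by auto
  have tn: "\<And>u. u < n \<Longrightarrow> ?t u < n" using bij_betwE[OF bij_betw_inv_into[OF b]] by auto
  have "bij_betw (\<lambda>g. restrict (g \<circ> \<sigma>) {0..<n}) (Aset n q \<alpha>) (Aset n p \<alpha>)"
  proof (rule bij_betw_byWitness[where f' = "\<lambda>f. restrict (f \<circ> ?t) {0..<n}"])
    show "\<forall>g\<in>Aset n q \<alpha>. restrict (restrict (g \<circ> \<sigma>) {0..<n} \<circ> ?t) {0..<n} = g"
    proof
      fix g assume "g \<in> Aset n q \<alpha>"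
      then have "g \<in> {0..<n} \<rightarrow>\<^sub>E UNIV" by (simp add: Aset_def)
      then show "restrict (restrict (g \<circ> \<sigma>) {0..<n} \<circ> ?t) {0..<n} = g"
        by (auto simp: fun_eq_iff st tn PiE_def extensional_def)
    qed
    show "\<forall>f\<in>Aset n p \<alpha>. restrict (restrict (f \<circ> ?t) {0..<n} \<circ> \<sigma>) {0..<n} = f"
    proof
      fix g assume "g \<in> Aset n p \<alpha>"
      then have "g \<in> {0..<n} \<rightarrow>\<^sub>E UNIV" by (simp add: Aset_def)
      then show "restrict (restrict (g \<circ> ?t) {0..<n} \<circ> \<sigma>) {0..<n} = g"
        by (auto simp: fun_eq_iff ts sn PiE_def extensional_def)
    qed
    show "(\<lambda>g. restrict (g \<circ> \<sigma>) {0..<n}) ` Aset n q \<alpha> \<subseteq> Aset n p \<alpha>"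
      using wit_Aset[OF assms(1) s] by auto
    show "(\<lambda>f. restrict (f \<circ> ?t) {0..<n}) ` Aset n p \<alpha> \<subseteq> Aset n q \<alpha>"
      using wit_Aset[OF assms(2) t] by auto
  qed
  then show ?thesis by (simp add: Fcoeff_Aset bij_betw_same_card)
qed

lemma iso_equiv: "equiv (rtrees n) (iso_rel n)"
proof (rule equivI)
  show "iso_rel n \<subseteq> rtrees n \<times> rtrees n" by (auto simp: iso_rel_def)
  show "refl_on (rtrees n) (iso_rel n)"
  proof (rule refl_onI)
    fix p assume "p \<in> rtrees n"
    then show "(p, p) \<in> iso_rel n"
      by (auto simp: iso_rel_def tree_iso_def intro!: exI[of _ id])
  qed
  show "sym (iso_rel n)"
  proof (rule symI)
    fix p q assume "(p, q) \<in> iso_rel n"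
    then show "(q, p) \<in> iso_rel n"
      by (auto simp: iso_rel_def tree_iso_wit dest: wit_inv)
  qed
  show "trans (iso_rel n)"
  proof (rule transI)
    fix p q r assume pq: "(p, q) \<in> iso_rel n" and qr: "(q, r) \<in> iso_rel n"
    then obtain s1 s2 where s1: "iso_wit n p q s1" and s2: "iso_wit n q r s2"
      by (auto simp: iso_rel_def tree_iso_wit)
    have "iso_wit n p r (s2 \<circ> s1)"
      unfolding iso_wit_def
    proof (intro conjI allI impI)
      show "bij_betw (s2 \<circ> s1) {0..<n} {0..<n}"
        using s1 s2 by (auto simp: iso_wit_def intro: bij_betw_trans)
      show "(s2 \<circ> s1) 0 = 0" using s1 s2 by (simp add: iso_wit_def)
      fix i assume i: "0 < i \<and> i < n"
      then have "r (s2 (s1 i)) = s2 (q (s1 i))"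
        using s2 wit_nonzero[OF s1, of i] by (auto simp: iso_wit_def)
      also have "\<dots> = s2 (s1 (p i))" using s1 i by (auto simp: iso_wit_def)
      finally show "r ((s2 \<circ> s1) i) = (s2 \<circ> s1) (p i)" by simp
    qed
    then show "(p, r) \<in> iso_rel n" using pq qr by (auto simp: iso_rel_def tree_iso_wit)
  qed
qed

lemma finite_rtrees: "finite (rtrees n)"
proof -
  have "rtrees n \<subseteq> (\<lambda>f i. if i < n then f i else 0) ` ({0..<n} \<rightarrow>\<^sub>E {0..<n})"
  proof
    fix p assume p: "p \<in> rtrees n"
    have "p = (\<lambda>i. if i < n then restrict p {0..<n} i else 0)"
      using p by (auto simp: fun_eq_iff rtrees_def)
    moreover have "restrict p {0..<n} \<in> {0..<n} \<rightarrow>\<^sub>E {0..<n}"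
      using rtreesD(4)[OF p] by auto
    ultimately show "p \<in> (\<lambda>f i. if i < n then f i else 0) ` ({0..<n} \<rightarrow>\<^sub>E {0..<n})" by blast
  qed
  then show ?thesis by (rule finite_subset) (auto intro: finite_PiE)
qed

lemma finite_classes: "finite (tree_classes n)"
  unfolding tree_classes_def
  by (rule finite_quotient[OF finite_rtrees]) (auto simp: iso_rel_def)

lemma class_rep:
  assumes "C \<in> tree_classes n"
  shows "(SOME p. p \<in> C) \<in> C" "C \<subseteq> rtrees n" "C = iso_rel n `` {SOME p. p \<in> C}"
proof -
  obtain x where x: "x \<in> rtrees n" "C = iso_rel n `` {x}" using assms
    by (auto simp: tree_classes_def elim: quotientE)
  have "x \<in> C" using x equiv_class_self[OF iso_equiv] by simp
  then show s: "(SOME p. p \<in> C) \<in> C" by (rule someI[of "\<lambda>p. p \<in> C"])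
  show "C \<subseteq> rtrees n" using x by (auto simp: iso_rel_def)
  show "C = iso_rel n `` {SOME p. p \<in> C}"
    using x s equiv_class_eq[OF iso_equiv] by (metis Image_singleton_iff)
qed



definition rootT :: "nat \<Rightarrow> (nat \<Rightarrow> nat) \<Rightarrow> nat \<Rightarrow> nat" where
  "rootT n p = (\<lambda>i. if i = 0 \<or> n < i \<or> i = 1 then 0 else Suc (p (i - 1)))"

lemma rootT_rtrees:
  assumes "p \<in> rtrees n" shows "rootT n p \<in> rtrees (Suc n)"
proof -
  have "rootT n p i < i" if "0 < i" "i < Suc n" for i
  proof (cases "i = 1")
    case False
    then have "p (i - 1) < i - 1" using rtreesD(2)[OF assms, of "i - 1"] that by auto
    then show ?thesis using that False by (auto simp: rootT_def)
  qed (auto simp: rootT_def)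
  then show ?thesis by (auto simp: rtrees_def rootT_def)
qed

lemma val_pos:
  assumes "f \<in> Aset n p \<beta>" "u < n"
  shows "\<beta> (f u) \<noteq> 0"
proof -
  have "card {v \<in> {0..<n}. f v = f u} = \<beta> (f u)" using assms by (auto simp: Aset_def)
  moreover have "card {v \<in> {0..<n}. f v = f u} \<noteq> 0"
  proof -
    have "u \<in> {v \<in> {0..<n}. f v = f u}" using assms by auto
    moreover have "finite {v \<in> {0..<n}. f v = f u}" by simp
    ultimately show ?thesis using card_0_eq by blast
  qed
  ultimately show ?thesis by simp
qed

lemma rootT_F:
  assumes p: "p \<in> rtrees n" and am: "\<alpha> m = 1" and ak: "\<And>k. m < k \<Longrightarrow> \<alpha> k = 0"
  shows "Fcoeff (Suc n) (rootT n p) \<alpha> = Fcoeff n p (\<alpha>(m:=0))"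
proof -
  have n1: "1 \<le> n" using rtreesD(1)[OF p] .
  have rp: "rootT n p \<in> rtrees (Suc n)" using rootT_rtrees[OF p] .
  define ex1 where "ex1 = (\<lambda>f. \<lambda>u\<in>{0..<Suc n}. if u = 0 then m else f (u - 1))"
  define bk where "bk = (\<lambda>g. \<lambda>v\<in>{0..<n}. (g (Suc v) :: nat))"
  have ex1_in: "ex1 f \<in> Aset (Suc n) (rootT n p) \<alpha>" if f: "f \<in> Aset n p (\<alpha>(m:=0))" for f
  proof -
    have tpf: "tpartition n p f" and cf: "\<And>k. card {u \<in> {0..<n}. f u = k} = (\<alpha>(m:=0)) k"
      using f by (auto simp: Aset_def)
    have fl: "f u < m" if "u < n" for u
    proof -
      have "(\<alpha>(m:=0)) (f u) \<noteq> 0" using val_pos[OF f that] .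
      then show ?thesis using ak[of "f u"] by (cases "f u = m"; cases "m < f u") auto
    qed
    have tp: "tpartition (Suc n) (rootT n p) (ex1 f)"
      unfolding tpartition_def
    proof (intro conjI allI impI)
      fix u assume "u < Suc n"
      then show "1 \<le> ex1 f u" using fl[of 0] n1 tpf by (auto simp: ex1_def tpartition_def)
    next
      fix u assume u: "0 < u \<and> u < Suc n"
      show "ex1 f u < ex1 f (rootT n p u)"
      proof (cases "u = 1")
        case True then show ?thesis using fl[of 0] n1 by (auto simp: ex1_def rootT_def)
      next
        case False
        then have u2: "0 < u - 1" "u - 1 < n" using u by auto
        then have "p (u - 1) < n" using rtreesD(4)[OF p] by auto
        moreover have "f (u - 1) < f (p (u - 1))" using tpf u2 by (auto simp: tpartition_def)
        ultimately show ?thesis using u False by (auto simp: ex1_def rootT_def)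
      qed
    qed
    have "card {u \<in> {0..<Suc n}. ex1 f u = k} = \<alpha> k" for k
    proof (cases "k = m")
      case True
      have "{u \<in> {0..<Suc n}. ex1 f u = k} = {0}"
      proof (intro set_eqI iffI)
        fix u assume u: "u \<in> {u \<in> {0..<Suc n}. ex1 f u = k}"
        show "u \<in> {0}"
        proof (cases u)
          case (Suc v) then show ?thesis using u fl[of v] True by (auto simp: ex1_def)
        qed simp
      qed (use True in \<open>auto simp: ex1_def\<close>)
      then show ?thesis using True am by simp
    next
      case False
      have "{u \<in> {0..<Suc n}. ex1 f u = k} = Suc ` {v \<in> {0..<n}. f v = k}"
      proof (intro set_eqI iffI)
        fix u assume "u \<in> {u \<in> {0..<Suc n}. ex1 f u = k}"
        then show "u \<in> Suc ` {v \<in> {0..<n}. f v = k}" using False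
          by (cases u) (auto simp: ex1_def)
      next
        fix u assume "u \<in> Suc ` {v \<in> {0..<n}. f v = k}"
        then show "u \<in> {u \<in> {0..<Suc n}. ex1 f u = k}" by (auto simp: ex1_def)
      qed
      then show ?thesis using cf[of k] False by (simp add: card_image)
    qed
    then show ?thesis using tp by (auto simp: Aset_def ex1_def)
  qed
  have bk_in: "bk g \<in> Aset n p (\<alpha>(m:=0))" and ex1_bk: "ex1 (bk g) = g"
    if g: "g \<in> Aset (Suc n) (rootT n p) \<alpha>" for g
  proof -
    have tpg: "tpartition (Suc n) (rootT n p) g" and cg: "\<And>k. card {u \<in> {0..<Suc n}. g u = k} = \<alpha> k"
      and ge: "g \<in> {0..<Suc n} \<rightarrow>\<^sub>E UNIV"
      using g by (auto simp: Aset_def)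
    have g0: "g 0 = m"
    proof -
      have "\<alpha> (g 0) = 1" "\<And>k. g 0 < k \<Longrightarrow> \<alpha> k = 0" using root_content[OF rp g] by auto
      then show ?thesis using am ak[of "g 0"] by (cases "g 0 < m"; cases "m < g 0") auto
    qed
    have gl: "g u < m" if "0 < u" "u < Suc n" for u
      using below_root[OF rp tpg that] g0 by simp
    have tp: "tpartition n p (bk g)"
      unfolding tpartition_def
    proof (intro conjI allI impI)
      fix u assume "u < n"
      then show "1 \<le> bk g u" using tpg by (auto simp: bk_def tpartition_def)
    next
      fix u assume u: "0 < u \<and> u < n"
      have "p u < n" using u rtreesD(4)[OF p] by auto
      moreover have "g (Suc u) < g (rootT n p (Suc u))" using tpg u by (auto simp: tpartition_def)
      ultimately show "bk g u < bk g (p u)" using u by (auto simp: bk_def rootT_def)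
    qed
    have "card {v \<in> {0..<n}. bk g v = k} = (\<alpha>(m:=0)) k" for k
    proof (cases "k = m")
      case True
      have "bk g v \<noteq> k" if "v < n" for v using gl[of "Suc v"] that True by (simp add: bk_def)
      then have "{v \<in> {0..<n}. bk g v = k} = {}" by auto
      then show ?thesis using True by simp
    next
      case False
      have "Suc ` {v \<in> {0..<n}. bk g v = k} = {u \<in> {0..<Suc n}. g u = k}"
      proof (intro set_eqI iffI)
        fix u assume "u \<in> {u \<in> {0..<Suc n}. g u = k}"
        then show "u \<in> Suc ` {v \<in> {0..<n}. bk g v = k}" using False g0
          by (cases u) (auto simp: bk_def)
      next
        fix u assume "u \<in> Suc ` {v \<in> {0..<n}. bk g v = k}"
        then show "u \<in> {u \<in> {0..<Suc n}. g u = k}" by (auto simp: bk_def)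
      qed
      then have "card {v \<in> {0..<n}. bk g v = k} = card {u \<in> {0..<Suc n}. g u = k}"
        using card_image[of Suc "{v \<in> {0..<n}. bk g v = k}"] inj_Suc by simp
      then show ?thesis using cg[of k] False by simp
    qed
    then show "bk g \<in> Aset n p (\<alpha>(m:=0))" using tp by (auto simp: Aset_def bk_def)
    show "ex1 (bk g) = g"
    proof
      fix u show "ex1 (bk g) u = g u"
        using ge g0 by (cases u) (auto simp: ex1_def bk_def PiE_def extensional_def)
    qed
  qed
  have bk_ex1: "bk (ex1 f) = f" if f: "f \<in> Aset n p (\<alpha>(m:=0))" for f
  proof
    have fe: "f \<in> {0..<n} \<rightarrow>\<^sub>E UNIV" using f by (auto simp: Aset_def)
    fix u show "bk (ex1 f) u = f u"
      using fe by (auto simp: ex1_def bk_def PiE_def extensional_def)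
  qed
  have "bij_betw ex1 (Aset n p (\<alpha>(m:=0))) (Aset (Suc n) (rootT n p) \<alpha>)"
    by (rule bij_betw_byWitness[where f' = bk]) (use ex1_in bk_in ex1_bk bk_ex1 in auto)
  then show ?thesis by (simp add: Fcoeff_Aset bij_betw_same_card)
qed

lemma Fcoeff_zero:
  assumes p: "p \<in> rtrees N" and nm: "\<not> (\<exists>m. \<alpha> m = 1 \<and> (\<forall>k. m < k \<longrightarrow> \<alpha> k = 0))"
  shows "Fcoeff N p \<alpha> = 0"
proof -
  have "Aset N p \<alpha> = {}"
  proof (rule ccontr)
    assume "Aset N p \<alpha> \<noteq> {}"
    then obtain g where "g \<in> Aset N p \<alpha>" by blast
    then show False using root_content[OF p] nm by blast
  qed
  then show ?thesis by (simp add: Fcoeff_Aset)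
qed



lemma rootT_iso:
  assumes p: "p \<in> rtrees n" and q: "q \<in> rtrees n" and iso: "tree_iso (Suc n) (rootT n p) (rootT n q)"
  shows "tree_iso n p q"
proof -
  obtain \<sigma> where s: "iso_wit (Suc n) (rootT n p) (rootT n q) \<sigma>" using iso tree_iso_wit by blast
  have b: "bij_betw \<sigma> {0..<Suc n} {0..<Suc n}" and s0: "\<sigma> 0 = 0"
    and cm: "\<And>i. 0 < i \<Longrightarrow> i < Suc n \<Longrightarrow> rootT n q (\<sigma> i) = \<sigma> (rootT n p i)"
    using s by (auto simp: iso_wit_def)
  have inj: "inj_on \<sigma> {0..<Suc n}" using b by (simp add: bij_betw_def)
  have n1: "1 \<le> n" using rtreesD(1)[OF p] .
  have nz: "0 < \<sigma> i" "\<sigma> i < Suc n" if "0 < i" "i < Suc n" for i using wit_nonzero[OF s that] by auto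
  have s1: "\<sigma> 1 = 1"
  proof -
    have "rootT n q (\<sigma> 1) = 0" using cm[of 1] n1 s0 by (simp add: rootT_def)
    moreover have "0 < \<sigma> 1" "\<sigma> 1 < Suc n" using nz[of 1] n1 by auto
    ultimately show ?thesis unfolding rootT_def by (cases "\<sigma> 1 = 0 \<or> n < \<sigma> 1 \<or> \<sigma> 1 = 1") auto
  qed
  define \<tau> where "\<tau> = (\<lambda>j. \<sigma> (Suc j) - 1)"
  have sne1: "\<sigma> (Suc j) \<noteq> 1" if "0 < j" "j < n" for j
  proof
    assume "\<sigma> (Suc j) = 1"
    then have "\<sigma> (Suc j) = \<sigma> 1" using s1 by simp
    then have "Suc j = 1" using inj that by (auto dest: inj_onD)
    then show False using that by simp
  qed
  have tinj: "inj_on \<tau> {0..<n}"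
  proof (rule inj_onI)
    fix i j assume ij: "i \<in> {0..<n}" "j \<in> {0..<n}" "\<tau> i = \<tau> j"
    then have "\<sigma> (Suc i) = \<sigma> (Suc j)" using nz[of "Suc i"] nz[of "Suc j"] by (simp add: \<tau>_def)
    then show "i = j" using inj ij by (auto dest: inj_onD)
  qed
  have "\<tau> j < n" if "j < n" for j using nz[of "Suc j"] that by (simp add: \<tau>_def)
  then have tsub: "\<tau> ` {0..<n} \<subseteq> {0..<n}" by auto
  have tb: "bij_betw \<tau> {0..<n} {0..<n}"
    using tinj endo_inj_surj[OF _ tsub tinj] by (simp add: bij_betw_def)
  have t0: "\<tau> 0 = 0" using s1 by (simp add: \<tau>_def)
  have "q (\<tau> j) = \<tau> (p j)" if j: "0 < j" "j < n" for j
  proof -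
    have a: "2 \<le> \<sigma> (Suc j)" "\<sigma> (Suc j) \<le> n" using nz[of "Suc j"] sne1[OF j] j by auto
    have "rootT n q (\<sigma> (Suc j)) = Suc (q (\<tau> j))" using a by (simp add: rootT_def \<tau>_def)
    moreover have "rootT n p (Suc j) = Suc (p j)" using j by (simp add: rootT_def)
    ultimately have "Suc (q (\<tau> j)) = \<sigma> (Suc (p j))" using cm[of "Suc j"] j by simp
    then show ?thesis by (simp add: \<tau>_def)
  qed
  then show ?thesis using tb t0 by (auto simp: tree_iso_wit iso_wit_def)
qed



lemma step_lift:
  assumes IH: "\<exists>c::(nat\<Rightarrow>nat) set \<Rightarrow> rat. (\<exists>C\<in>tree_classes n. c C \<noteq> 0) \<and>
      (\<forall>\<alpha>. (\<Sum>C\<in>tree_classes n. c C * of_nat (Fclass n C \<alpha>)) = 0)"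
  shows "\<exists>c::(nat\<Rightarrow>nat) set \<Rightarrow> rat. (\<exists>C\<in>tree_classes (Suc n). c C \<noteq> 0) \<and>
      (\<forall>\<alpha>. (\<Sum>C\<in>tree_classes (Suc n). c C * of_nat (Fclass (Suc n) C \<alpha>)) = 0)"
proof -
  obtain c :: "(nat\<Rightarrow>nat) set \<Rightarrow> rat" where c0: "\<exists>C\<in>tree_classes n. c C \<noteq> 0"
    and csum: "\<And>\<alpha>. (\<Sum>C\<in>tree_classes n. c C * of_nat (Fclass n C \<alpha>)) = 0" using IH by blast
  define rep where "rep = (\<lambda>C :: (nat\<Rightarrow>nat) set. SOME p. p \<in> C)"
  define lift where "lift = (\<lambda>C. iso_rel (Suc n) `` {rootT n (rep C)})"
  have rep_in: "rep C \<in> rtrees n" if "C \<in> tree_classes n" for C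
    using class_rep[OF that] by (auto simp: rep_def)
  have lift_in: "lift C \<in> tree_classes (Suc n)" if "C \<in> tree_classes n" for C
    unfolding lift_def tree_classes_def using rootT_rtrees[OF rep_in[OF that]] by (rule quotientI)
  have self: "rootT n (rep C) \<in> lift C" if "C \<in> tree_classes n" for C
    unfolding lift_def using equiv_class_self[OF iso_equiv rootT_rtrees[OF rep_in[OF that]]] .
  have Flift: "Fclass (Suc n) (lift C) \<alpha> = Fcoeff (Suc n) (rootT n (rep C)) \<alpha>"
    if C: "C \<in> tree_classes n" for C \<alpha>
  proof -
    have "(SOME q. q \<in> lift C) \<in> lift C" using class_rep(1)[OF lift_in[OF C]] .
    then have "(rootT n (rep C), SOME q. q \<in> lift C) \<in> iso_rel (Suc n)" by (simp add: lift_def)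
    then show ?thesis unfolding Fclass_def using Fcoeff_iso by (auto simp: iso_rel_def)
  qed
  have inj: "inj_on lift (tree_classes n)"
  proof (rule inj_onI)
    fix C1 C2 assume C1: "C1 \<in> tree_classes n" and C2: "C2 \<in> tree_classes n" and eq: "lift C1 = lift C2"
    have "rootT n (rep C2) \<in> lift C1" using self[OF C2] eq by simp
    then have "tree_iso (Suc n) (rootT n (rep C1)) (rootT n (rep C2))" by (simp add: lift_def iso_rel_def)
    then have "tree_iso n (rep C1) (rep C2)" using rootT_iso rep_in C1 C2 by blast
    then have "(rep C1, rep C2) \<in> iso_rel n" using rep_in C1 C2 by (simp add: iso_rel_def)
    then have "iso_rel n `` {rep C1} = iso_rel n `` {rep C2}" using equiv_class_eq[OF iso_equiv] by blast
    then show "C1 = C2" using class_rep(3)[OF C1] class_rep(3)[OF C2] by (simp add: rep_def)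
  qed
  define c' where "c' = (\<lambda>D. if D \<in> lift ` tree_classes n then c (inv_into (tree_classes n) lift D) else 0)"
  have c'l: "c' (lift C) = c C" if "C \<in> tree_classes n" for C
    using that inj by (simp add: c'_def inv_into_f_f)
  show ?thesis
  proof (intro exI[of _ c'] conjI allI)
    from c0 obtain C where "C \<in> tree_classes n" "c C \<noteq> 0" by blast
    then show "\<exists>C\<in>tree_classes (Suc n). c' C \<noteq> 0" using lift_in c'l by metis
  next
    fix \<alpha>
    have "(\<Sum>D\<in>tree_classes (Suc n). c' D * of_nat (Fclass (Suc n) D \<alpha>))
        = (\<Sum>D\<in>lift ` tree_classes n. c' D * of_nat (Fclass (Suc n) D \<alpha>))"
      by (rule sum.mono_neutral_right) (auto simp: finite_classes lift_in c'_def)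
    also have "\<dots> = (\<Sum>C\<in>tree_classes n. c' (lift C) * of_nat (Fclass (Suc n) (lift C) \<alpha>))"
      by (rule sum.reindex[OF inj, unfolded comp_def])
    also have "\<dots> = (\<Sum>C\<in>tree_classes n. c C * of_nat (Fcoeff (Suc n) (rootT n (rep C)) \<alpha>))"
      by (rule sum.cong) (auto simp: c'l Flift)
    also have "\<dots> = 0"
    proof (cases "\<exists>m. \<alpha> m = 1 \<and> (\<forall>k. m < k \<longrightarrow> \<alpha> k = 0)")
      case True
      then obtain m where m: "\<alpha> m = 1" "\<And>k. m < k \<Longrightarrow> \<alpha> k = 0" by blast
      have "(\<Sum>C\<in>tree_classes n. c C * of_nat (Fcoeff (Suc n) (rootT n (rep C)) \<alpha>))
          = (\<Sum>C\<in>tree_classes n. c C * of_nat (Fclass n C (\<alpha>(m:=0))))"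
      proof (rule sum.cong)
        fix C assume C: "C \<in> tree_classes n"
        show "c C * of_nat (Fcoeff (Suc n) (rootT n (rep C)) \<alpha>) = c C * of_nat (Fclass n C (\<alpha>(m:=0)))"
          using rootT_F[OF rep_in[OF C], of \<alpha> m] m by (simp add: Fclass_def rep_def)
      qed simp
      then show ?thesis using csum by simp
    next
      case False
      have "Fcoeff (Suc n) (rootT n (rep C)) \<alpha> = 0" if "C \<in> tree_classes n" for C
        using Fcoeff_zero[OF rootT_rtrees[OF rep_in[OF that]] False] .
      then show ?thesis by simp
    qed
    finally show "(\<Sum>D\<in>tree_classes (Suc n). c' D * of_nat (Fclass (Suc n) D \<alpha>)) = 0" .
  qed
qed



definition hk :: "nat \<Rightarrow> nat \<Rightarrow> nat" where "hk k j = (if j < k then j else Suc j)"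
definition hik :: "nat \<Rightarrow> nat \<Rightarrow> nat" where "hik k i = (if i < k then i else i - 1)"

lemma hk_facts:
  shows "hik k (hk k j) = j" "i \<noteq> k \<Longrightarrow> hk k (hik k i) = i" "hk k j \<noteq> k"
    "a < b \<Longrightarrow> hk k a < hk k b" "i \<noteq> k \<Longrightarrow> i' \<noteq> k \<Longrightarrow> i < i' \<Longrightarrow> hik k i < hik k i'"
    "j \<le> hk k j" "0 < k \<Longrightarrow> 0 < i \<Longrightarrow> i \<noteq> k \<Longrightarrow> 0 < hik k i"
  by (auto simp: hk_def hik_def)

lemma shift:
  assumes p: "p \<in> rtrees n" and k: "0 < k" "\<alpha> k = 0"
  shows "Fcoeff n p \<alpha> = Fcoeff n p (\<lambda>j. \<alpha> (hk k j))"
proof -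
  define F where "F = (\<lambda>f. restrict (\<lambda>u. hk k (f u)) {0..<n})"
  define G where "G = (\<lambda>g. restrict (\<lambda>u. hik k (g u)) {0..<n})"
  have pn: "\<And>u. u < n \<Longrightarrow> p u < n" using rtreesD(4)[OF p] .
  have F_in: "F f \<in> Aset n p \<alpha>" if f: "f \<in> Aset n p (\<lambda>j. \<alpha> (hk k j))" for f
  proof -
    have tp: "tpartition n p f" and cf: "\<And>j. card {u \<in> {0..<n}. f u = j} = \<alpha> (hk k j)"
      using f by (auto simp: Aset_def)
    have "tpartition n p (F f)"
      using tp pn hk_facts(4,6) unfolding tpartition_def F_def by (auto intro: le_trans)
    moreover have "card {u \<in> {0..<n}. F f u = i} = \<alpha> i" for i
    proof (cases "i = k")
      case True
      then have "{u \<in> {0..<n}. F f u = i} = {}" using hk_facts(3) by (auto simp: F_def)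
      then show ?thesis using True k by simp
    next
      case False
      have "{u \<in> {0..<n}. F f u = i} = {u \<in> {0..<n}. f u = hik k i}"
        using False hk_facts(1,2) by (auto simp: F_def)
      then show ?thesis using cf[of "hik k i"] hk_facts(2)[OF False] by simp
    qed
    ultimately show ?thesis by (auto simp: Aset_def F_def)
  qed
  have G_in: "G g \<in> Aset n p (\<lambda>j. \<alpha> (hk k j))" and FG: "F (G g) = g" if g: "g \<in> Aset n p \<alpha>" for g
  proof -
    have tp: "tpartition n p g" and cg: "\<And>i. card {u \<in> {0..<n}. g u = i} = \<alpha> i"
      and ge: "g \<in> {0..<n} \<rightarrow>\<^sub>E UNIV" using g by (auto simp: Aset_def)
    have gk: "g u \<noteq> k" if "u < n" for u using val_pos[OF g that] k by auto
    have "tpartition n p (G g)"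
      unfolding tpartition_def
    proof (intro conjI allI impI)
      fix u assume u: "u < n"
      then have "1 \<le> g u" using tp by (simp add: tpartition_def)
      then show "1 \<le> G g u" using hk_facts(7)[OF k(1), of "g u"] gk[OF u] u by (simp add: G_def)
    next
      fix u assume u: "0 < u \<and> u < n"
      then have "g u < g (p u)" using tp by (simp add: tpartition_def)
      then show "G g u < G g (p u)" using hk_facts(5) gk u pn by (simp add: G_def)
    qed
    moreover have "card {u \<in> {0..<n}. G g u = j} = \<alpha> (hk k j)" for j
    proof -
      have "{u \<in> {0..<n}. G g u = j} = {u \<in> {0..<n}. g u = hk k j}"
        using gk hk_facts(1,2) by (auto simp: G_def)
      then show ?thesis using cg by simp
    qed
    ultimately show "G g \<in> Aset n p (\<lambda>j. \<alpha> (hk k j))" by (auto simp: Aset_def G_def)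
    show "F (G g) = g"
    proof
      fix u show "F (G g) u = g u" using ge gk hk_facts(2)
        by (cases "u < n") (auto simp: F_def G_def PiE_def extensional_def)
    qed
  qed
  have GF: "G (F f) = f" if f: "f \<in> Aset n p (\<lambda>j. \<alpha> (hk k j))" for f
  proof
    have fe: "f \<in> {0..<n} \<rightarrow>\<^sub>E UNIV" using f by (auto simp: Aset_def)
    fix u show "G (F f) u = f u" using fe hk_facts(1)
      by (cases "u < n") (auto simp: F_def G_def PiE_def extensional_def)
  qed
  have "bij_betw F (Aset n p (\<lambda>j. \<alpha> (hk k j))) (Aset n p \<alpha>)"
    by (rule bij_betw_byWitness[where f' = G]) (use F_in G_in FG GF in auto)
  then show ?thesis by (simp add: Fcoeff_Aset bij_betw_same_card)
qed



definition Norm :: "nat \<Rightarrow> (nat \<Rightarrow> nat) set" where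
  "Norm n = {\<alpha>. \<alpha> 0 = 0 \<and> (\<exists>m. \<alpha> m = 1 \<and> (\<forall>k. m < k \<longrightarrow> \<alpha> k = 0) \<and>
      (\<forall>k. 0 < k \<and> k < m \<longrightarrow> 0 < \<alpha> k) \<and> sum \<alpha> {..m} = n)}"

lemma gapind:
  "\<alpha> 0 = 0 \<Longrightarrow> \<alpha> m = 1 \<Longrightarrow> (\<forall>k. m < k \<longrightarrow> \<alpha> k = 0) \<Longrightarrow> sum \<alpha> {..m} = n \<Longrightarrow>
   \<exists>\<alpha>'\<in>Norm n. \<forall>p\<in>rtrees n. Fcoeff n p \<alpha> = Fcoeff n p \<alpha>'"
proof (induction m arbitrary: \<alpha> rule: less_induct)
  case (less m)
  show ?case
  proof (cases "\<forall>k. 0 < k \<and> k < m \<longrightarrow> 0 < \<alpha> k")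
    case True
    then have "\<alpha> \<in> Norm n" using less.prems by (auto simp: Norm_def)
    then show ?thesis by blast
  next
    case False
    then obtain k where k: "0 < k" "k < m" "\<alpha> k = 0" by auto
    define \<alpha>' where "\<alpha>' = (\<lambda>j. \<alpha> (hk k j))"
    have a0: "\<alpha>' 0 = 0" using k less.prems by (simp add: \<alpha>'_def hk_def)
    have a1: "\<alpha>' (m - 1) = 1" using k less.prems by (simp add: \<alpha>'_def hk_def)
    have a2: "\<forall>j. m - 1 < j \<longrightarrow> \<alpha>' j = 0" using k less.prems by (simp add: \<alpha>'_def hk_def)
    have img: "hk k ` {..m - 1} = {..m} - {k}"
    proof (intro set_eqI iffI)
      fix i assume "i \<in> hk k ` {..m - 1}"
      then show "i \<in> {..m} - {k}" using k by (auto simp: hk_def)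
    next
      fix i assume i: "i \<in> {..m} - {k}"
      then have "hik k i \<in> {..m - 1}" using k by (auto simp: hik_def)
      moreover have "hk k (hik k i) = i" using i hk_facts(2) by auto
      ultimately show "i \<in> hk k ` {..m - 1}" by (metis imageI)
    qed
    have injh: "inj_on (hk k) {..m - 1}" by (rule inj_onI) (metis hk_facts(1))
    have "sum \<alpha>' {..m - 1} = sum \<alpha> (hk k ` {..m - 1})"
      using sum.reindex[OF injh, of \<alpha>] by (simp add: \<alpha>'_def comp_def)
    also have "\<dots> = sum \<alpha> {..m}" using img k sum.remove[of "{..m}" k \<alpha>] by simp
    finally have a3: "sum \<alpha>' {..m - 1} = n" using less.prems by simp
    obtain \<beta> where \<beta>: "\<beta> \<in> Norm n" "\<forall>p\<in>rtrees n. Fcoeff n p \<alpha>' = Fcoeff n p \<beta>"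
      using less.IH[of "m - 1" \<alpha>'] a0 a1 a2 a3 k by auto
    have "\<forall>p\<in>rtrees n. Fcoeff n p \<alpha> = Fcoeff n p \<beta>"
    proof
      fix p assume p: "p \<in> rtrees n"
      show "Fcoeff n p \<alpha> = Fcoeff n p \<beta>" using \<beta>(2) p shift[OF p k(1), of \<alpha>] k(3) by (simp add: \<alpha>'_def)
    qed
    then show ?thesis using \<beta>(1) by blast
  qed
qed

lemma normalize:
  assumes p0: "p0 \<in> rtrees n" and nz: "Fcoeff n p0 \<alpha> \<noteq> 0"
  shows "\<exists>\<alpha>'\<in>Norm n. \<forall>p\<in>rtrees n. Fcoeff n p \<alpha> = Fcoeff n p \<alpha>'"
proof -
  have "Aset n p0 \<alpha> \<noteq> {}" using nz unfolding Fcoeff_Aset by (metis card.empty)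
  then obtain f where f: "f \<in> Aset n p0 \<alpha>" by blast
  have tp: "tpartition n p0 f" and cf: "\<And>k. card {u \<in> {0..<n}. f u = k} = \<alpha> k"
    using f by (auto simp: Aset_def)
  define m where "m = f 0"
  have a0: "\<alpha> 0 = 0" using Aset_alpha0[OF f] .
  have a1: "\<alpha> m = 1" "\<forall>k. m < k \<longrightarrow> \<alpha> k = 0" using root_content[OF p0 f] by (auto simp: m_def)
  have fle: "f u \<le> m" if "u < n" for u
    using below_root[OF p0 tp, of u] that by (cases "u = 0") (auto simp: m_def)
  have "sum \<alpha> {..m} = (\<Sum>k\<in>{..m}. card {u \<in> {0..<n}. f u = k})" using cf by simp
  also have "\<dots> = card (\<Union>k\<in>{..m}. {u \<in> {0..<n}. f u = k})"
    by (rule card_UN_disjoint[symmetric]) auto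
  also have "(\<Union>k\<in>{..m}. {u \<in> {0..<n}. f u = k}) = {0..<n}" using fle by auto
  finally have a3: "sum \<alpha> {..m} = n" by simp
  show ?thesis using gapind[OF a0 a1 a3] .
qed



definition tr :: "nat list \<Rightarrow> nat \<Rightarrow> nat" where
  "tr l = (\<lambda>i. if i < length l then l ! i else 0)"

lemma tr_map: "(\<forall>k. m < k \<longrightarrow> \<alpha> k = 0) \<Longrightarrow> \<alpha> = tr (map \<alpha> [0..<Suc m])"
  by (auto simp: tr_def fun_eq_iff not_less simp del: upt_Suc)

definition L8 :: "nat list list" where
  "L8 = [[0,4,1],[0,1,3,1],[0,2,2,1],[0,3,1,1],[0,1,1,2,1],[0,1,2,1,1],[0,2,1,1,1],[0,1,1,1,1,1]]"

lemma sum5: "sum \<alpha> {..Suc m} = sum \<alpha> {..m} + \<alpha> (Suc m)" by (rule sum.atMost_Suc)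

lemma norm5: "\<alpha> \<in> Norm 5 \<Longrightarrow> \<alpha> \<in> tr ` set L8"
proof -
  assume "\<alpha> \<in> Norm 5"
  then obtain m where a0: "\<alpha> 0 = 0" and am: "\<alpha> m = 1" and az: "\<forall>k. m < k \<longrightarrow> \<alpha> k = 0"
    and ap: "\<forall>k. 0 < k \<and> k < m \<longrightarrow> 0 < \<alpha> k" and as: "sum \<alpha> {..m} = 5"
    by (auto simp: Norm_def)
  have pos: "0 < \<alpha> k" if "0 < k" "k \<le> m" for k using ap am that by (cases "k = m") auto
  have "sum (\<lambda>_. 1::nat) {1..m} \<le> sum \<alpha> {1..m}"
    by (rule sum_mono) (use pos in \<open>auto simp: Suc_le_eq\<close>)
  also have "\<dots> \<le> sum \<alpha> {..m}" by (rule sum_mono2) auto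
  finally have m5: "m \<le> 5" using as by simp
  have m0: "m \<noteq> 0" using a0 am by (cases m) auto
  have a: "\<alpha> = tr (map \<alpha> [0..<Suc m])" using tr_map[OF az] .
  have "map \<alpha> [0..<Suc m] \<in> set L8"
  proof -
    have "m = 1 \<or> m = 2 \<or> m = 3 \<or> m = 4 \<or> m = 5" using m5 m0 by arith
    then show ?thesis
    proof (elim disjE)
      assume "m = 1" then show ?thesis using as a0 am by simp
    next
      assume m: "m = 2"
      have e: "map \<alpha> [0..<Suc m] = [0, \<alpha> 1, 1]" using m a0 am by (simp add: numeral_eq_Suc)
      have "\<alpha> 0 + \<alpha> 1 + \<alpha> 2 = 5" using as m by (simp add: numeral_eq_Suc add.assoc)
      then have "\<alpha> 1 = 4" using a0 am m by simp
      then show ?thesis unfolding e by (auto simp: L8_def)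
    next
      assume m: "m = 3"
      have e: "map \<alpha> [0..<Suc m] = [0, \<alpha> 1, \<alpha> 2, 1]" using m a0 am by (simp add: numeral_eq_Suc)
      have "\<alpha> 0 + \<alpha> 1 + \<alpha> 2 + \<alpha> 3 = 5" using as m by (simp add: numeral_eq_Suc add.assoc)
      then have s: "\<alpha> 1 + \<alpha> 2 = 4" using a0 am m by simp
      have "0 < \<alpha> 1" "0 < \<alpha> 2" using ap m by auto
      then have "(\<alpha> 1 = 1 \<and> \<alpha> 2 = 3) \<or> (\<alpha> 1 = 2 \<and> \<alpha> 2 = 2) \<or> (\<alpha> 1 = 3 \<and> \<alpha> 2 = 1)" using s by arith
      then show ?thesis unfolding e by (auto simp: L8_def)
    next
      assume m: "m = 4"
      have e: "map \<alpha> [0..<Suc m] = [0, \<alpha> 1, \<alpha> 2, \<alpha> 3, 1]" using m a0 am by (simp add: numeral_eq_Suc)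
      have "\<alpha> 0 + \<alpha> 1 + \<alpha> 2 + \<alpha> 3 + \<alpha> 4 = 5" using as m by (simp add: numeral_eq_Suc add.assoc)
      then have s: "\<alpha> 1 + \<alpha> 2 + \<alpha> 3 = 4" using a0 am m by simp
      have "0 < \<alpha> 1" "0 < \<alpha> 2" "0 < \<alpha> 3" using ap m by auto
      then have "(\<alpha> 1 = 1 \<and> \<alpha> 2 = 1 \<and> \<alpha> 3 = 2) \<or> (\<alpha> 1 = 1 \<and> \<alpha> 2 = 2 \<and> \<alpha> 3 = 1) \<or> (\<alpha> 1 = 2 \<and> \<alpha> 2 = 1 \<and> \<alpha> 3 = 1)" using s by arith
      then show ?thesis unfolding e by (auto simp: L8_def)
    next
      assume m: "m = 5"
      have e: "map \<alpha> [0..<Suc m] = [0, \<alpha> 1, \<alpha> 2, \<alpha> 3, \<alpha> 4, 1]" using m a0 am by (simp add: numeral_eq_Suc)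
      have "\<alpha> 0 + \<alpha> 1 + \<alpha> 2 + \<alpha> 3 + \<alpha> 4 + \<alpha> 5 = 5" using as m by (simp add: numeral_eq_Suc add.assoc)
      then have s: "\<alpha> 1 + \<alpha> 2 + \<alpha> 3 + \<alpha> 4 = 4" using a0 am m by simp
      have "0 < \<alpha> 1" "0 < \<alpha> 2" "0 < \<alpha> 3" "0 < \<alpha> 4" using ap m by auto
      then have "\<alpha> 1 = 1 \<and> \<alpha> 2 = 1 \<and> \<alpha> 3 = 1 \<and> \<alpha> 4 = 1" using s by arith
      then show ?thesis unfolding e by (auto simp: L8_def)
    qed
  qed
  then show ?thesis using a by blast
qed



primrec dep :: "(nat \<Rightarrow> nat) \<Rightarrow> nat \<Rightarrow> nat \<Rightarrow> nat" where
  "dep p 0 i = 0"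
| "dep p (Suc k) i = (if i = 0 then 0 else Suc (dep p k (p i)))"

lemma bij_count:
  assumes b: "bij_betw \<sigma> {0..<n} {0..<n}" and pq: "\<And>i. i < n \<Longrightarrow> P i \<longleftrightarrow> Q (\<sigma> i)"
  shows "card {i \<in> {0..<n}. P i} = card {i \<in> {0..<n}. Q i}"
proof -
  have im: "\<sigma> ` {0..<n} = {0..<n}" and inj: "inj_on \<sigma> {0..<n}" using b by (auto simp: bij_betw_def)
  have "\<sigma> ` {i \<in> {0..<n}. P i} = {i \<in> {0..<n}. Q i}"
  proof (intro set_eqI iffI)
    fix v assume "v \<in> \<sigma> ` {i \<in> {0..<n}. P i}"
    then show "v \<in> {i \<in> {0..<n}. Q i}" using pq im by auto
  next
    fix v assume v: "v \<in> {i \<in> {0..<n}. Q i}"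
    then have "v \<in> \<sigma> ` {0..<n}" using im by simp
    then obtain u where "u \<in> {0..<n}" "v = \<sigma> u" by blast
    then show "v \<in> \<sigma> ` {i \<in> {0..<n}. P i}" using pq v by auto
  qed
  moreover have "inj_on \<sigma> {i \<in> {0..<n}. P i}" using inj by (rule inj_on_subset) auto
  ultimately show ?thesis using card_image[of \<sigma> "{i \<in> {0..<n}. P i}"] by simp
qed

lemma dep_iso:
  assumes p: "p \<in> rtrees n" and s: "iso_wit n p q \<sigma>"
  shows "i < n \<Longrightarrow> dep q k (\<sigma> i) = dep p k i"
proof (induction k arbitrary: i)
  case 0 then show ?case by simp
next
  case (Suc k)
  have s0: "\<sigma> 0 = 0" and cm: "\<And>i. 0 < i \<Longrightarrow> i < n \<Longrightarrow> q (\<sigma> i) = \<sigma> (p i)" using s by (auto simp: iso_wit_def)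
  show ?case
  proof (cases "i = 0")
    case True then show ?thesis using s0 by simp
  next
    case False
    then have "0 < \<sigma> i" using wit_nonzero[OF s, of i] Suc.prems by auto
    moreover have "p i < n" using rtreesD(4)[OF p] Suc.prems by auto
    ultimately show ?thesis using False cm[of i] Suc.prems Suc.IH[of "p i"] by simp
  qed
qed

definition sig :: "(nat \<Rightarrow> nat) \<Rightarrow> nat \<times> nat \<times> nat \<times> nat" where
  "sig p = (length (filter (\<lambda>i. dep p 5 i = 1) [0..<5]), length (filter (\<lambda>i. dep p 5 i = 2) [0..<5]),
            length (filter (\<lambda>i. dep p 5 i = 3) [0..<5]), length (filter (\<lambda>i. \<forall>j\<in>set [1..<5]. p j \<noteq> i) [0..<5]))"

lemma card_set_filter: "card {i \<in> {0..<n}. P i} = length (filter P [0..<n])"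
  by (simp add: distinct_length_filter Int_def conj_commute)

lemma sig_iso:
  assumes p: "p \<in> rtrees 5" and q: "q \<in> rtrees 5" and iso: "tree_iso 5 p q"
  shows "sig p = sig q"
proof -
  obtain \<sigma> where s: "iso_wit 5 p q \<sigma>" using iso tree_iso_wit by blast
  have b: "bij_betw \<sigma> {0..<5} {0..<5}" and s0: "\<sigma> 0 = 0"
    and cm: "\<And>i. 0 < i \<Longrightarrow> i < 5 \<Longrightarrow> q (\<sigma> i) = \<sigma> (p i)" using s by (auto simp: iso_wit_def)
  have inj: "inj_on \<sigma> {0..<5}" and im: "\<sigma> ` {0..<5} = {0..<5}" using b by (auto simp: bij_betw_def)
  have d: "\<And>d. card {i \<in> {0..<5}. dep p 5 i = d} = card {i \<in> {0..<5}. dep q 5 i = d}"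
    by (rule bij_count[OF b]) (use dep_iso[OF p s] in auto)
  have "(\<forall>j\<in>{1..<5}. p j \<noteq> i) \<longleftrightarrow> (\<forall>j\<in>{1..<5}. q j \<noteq> \<sigma> i)" if i: "i < 5" for i
  proof
    assume A: "\<forall>j\<in>{1..<5}. p j \<noteq> i"
    show "\<forall>j\<in>{1..<5}. q j \<noteq> \<sigma> i"
    proof (intro ballI notI)
      fix j assume j: "j \<in> {1..<5}" and e: "q j = \<sigma> i"
      have "j \<in> \<sigma> ` {0..<5}" using im j by simp
      then obtain j' where j': "j' < 5" "j = \<sigma> j'" by auto
      have "j' \<noteq> 0" using j j' s0 by (cases j') auto
      then have "\<sigma> (p j') = \<sigma> i" using cm[of j'] j' e by auto
      moreover have "p j' < 5" using rtreesD(4)[OF p] j' by auto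
      ultimately have "p j' = i" using inj i by (auto dest: inj_onD)
      then show False using A \<open>j' \<noteq> 0\<close> j' by auto
    qed
  next
    assume A: "\<forall>j\<in>{1..<5}. q j \<noteq> \<sigma> i"
    show "\<forall>j\<in>{1..<5}. p j \<noteq> i"
    proof (intro ballI notI)
      fix j assume j: "j \<in> {1..<5}" and e: "p j = i"
      have "q (\<sigma> j) = \<sigma> i" using cm[of j] j e by auto
      moreover have "0 < \<sigma> j" "\<sigma> j < 5" using wit_nonzero[OF s, of j] j by auto
      ultimately show False using A by auto
    qed
  qed
  then have l: "card {i \<in> {0..<5}. \<forall>j\<in>{1..<5}. p j \<noteq> i} = card {i \<in> {0..<5}. \<forall>j\<in>{1..<5}. q j \<noteq> i}"
    by (rule bij_count[OF b])
  show ?thesis using d[of 1] d[of 2] d[of 3] l by (simp only: sig_def card_set_filter[symmetric] set_upt)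
qed

definition T9 :: "nat list list" where
  "T9 = [[0,0,0,0,0],[0,0,0,0,1],[0,0,0,1,1],[0,0,0,1,2],[0,0,0,1,3],[0,0,1,1,1],[0,0,1,1,2],[0,0,1,2,2],[0,0,1,2,3]]"

lemma tr_rtrees_check:
  assumes "length l = n" "1 \<le> n" "l ! 0 = 0" "list_all (\<lambda>i. l ! i < i) [1..<n]"
  shows "tr l \<in> rtrees n"
  using assms by (auto simp: rtrees_def tr_def list_all_iff)

lemma T9_rtrees: "l \<in> set T9 \<Longrightarrow> tr l \<in> rtrees 5"
  unfolding T9_def by (auto intro!: tr_rtrees_check simp: upt_rec)

lemma T9_sig: "distinct (map (sig \<circ> tr) T9)"
  by (simp add: T9_def sig_def tr_def upt_rec eval_nat_numeral)



lemma base5: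
  "\<exists>c::(nat\<Rightarrow>nat) set \<Rightarrow> rat. (\<exists>C\<in>tree_classes 5. c C \<noteq> 0) \<and>
      (\<forall>\<alpha>. (\<Sum>C\<in>tree_classes 5. c C * of_nat (Fclass 5 C \<alpha>)) = 0)"
proof -
  define cls where "cls = (\<lambda>l. iso_rel 5 `` {tr l})"
  define I where "I = cls ` set T9"
  define E where "E = tr ` set L8"
  have dT: "distinct (map (sig \<circ> tr) T9)" by (rule T9_sig)
  then have dist: "distinct T9" and injs: "inj_on (sig \<circ> tr) (set T9)" by (auto simp: distinct_map)
  have injc: "inj_on cls (set T9)"
  proof (rule inj_onI)
    fix l1 l2 assume l: "l1 \<in> set T9" "l2 \<in> set T9" and e: "cls l1 = cls l2"
    have "tr l2 \<in> cls l2" unfolding cls_def by (rule equiv_class_self[OF iso_equiv T9_rtrees[OF l(2)]])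
    then have "tr l2 \<in> cls l1" using e by simp
    then have "(tr l1, tr l2) \<in> iso_rel 5" by (simp add: cls_def)
    then have "sig (tr l1) = sig (tr l2)" using sig_iso T9_rtrees l by (auto simp: iso_rel_def)
    then show "l1 = l2" using inj_onD[OF injs _ l(1) l(2)] by simp
  qed
  have cardI: "card I = 9" unfolding I_def using card_image[OF injc] distinct_card[OF dist]
    by (simp add: T9_def)
  have cardE: "card E \<le> 8" unfolding E_def
    using card_image_le[of "set L8" tr] card_length[of L8] by (simp add: L8_def)
  have IT: "I \<subseteq> tree_classes 5"
    unfolding I_def cls_def tree_classes_def using T9_rtrees by (auto intro: quotientI)
  have fI: "finite I" "finite E" by (auto simp: I_def E_def)
  obtain c :: "(nat\<Rightarrow>nat) set \<Rightarrow> rat" where c: "\<exists>i\<in>I. c i \<noteq> 0" "\<forall>e\<in>E. (\<Sum>C\<in>I. c C * of_nat (Fclass 5 C e)) = 0"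
    using lin_dep[OF fI(2) fI(1), of "\<lambda>e C. (of_nat (Fclass 5 C e) :: rat)"] cardI cardE by auto
  define c' where "c' = (\<lambda>C. if C \<in> I then c C else 0)"
  show ?thesis
  proof (intro exI[of _ c'] conjI allI)
    show "\<exists>C\<in>tree_classes 5. c' C \<noteq> 0" using c(1) IT by (auto simp: c'_def)
  next
    fix \<alpha>
    have "(\<Sum>C\<in>tree_classes 5. c' C * of_nat (Fclass 5 C \<alpha>)) = (\<Sum>C\<in>I. c' C * of_nat (Fclass 5 C \<alpha>))"
      by (rule sum.mono_neutral_right) (auto simp: finite_classes IT c'_def)
    also have "\<dots> = (\<Sum>C\<in>I. c C * of_nat (Fclass 5 C \<alpha>))" by (rule sum.cong) (auto simp: c'_def)
    also have "\<dots> = 0"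
    proof (cases "\<forall>p\<in>rtrees 5. Fcoeff 5 p \<alpha> = 0")
      case True
      have "Fclass 5 C \<alpha> = 0" if "C \<in> I" for C
      proof -
        have "C \<in> tree_classes 5" using that IT by auto
        then have "(SOME p. p \<in> C) \<in> rtrees 5" using class_rep by blast
        then show ?thesis using True by (simp add: Fclass_def)
      qed
      then show ?thesis by simp
    next
      case False
      then obtain p0 where "p0 \<in> rtrees 5" "Fcoeff 5 p0 \<alpha> \<noteq> 0" by blast
      then obtain \<alpha>' where a': "\<alpha>' \<in> Norm 5" "\<forall>p\<in>rtrees 5. Fcoeff 5 p \<alpha> = Fcoeff 5 p \<alpha>'"
        using normalize by blast
      have "\<alpha>' \<in> E" using norm5[OF a'(1)] by (simp add: E_def)
      moreover have "Fclass 5 C \<alpha> = Fclass 5 C \<alpha>'" if "C \<in> I" for C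
      proof -
        have "C \<in> tree_classes 5" using that IT by auto
        then have "(SOME p. p \<in> C) \<in> rtrees 5" using class_rep by blast
        then show ?thesis using a'(2) by (simp add: Fclass_def)
      qed
      ultimately show ?thesis using c(2) by simp
    qed
    finally show "(\<Sum>C\<in>tree_classes 5. c' C * of_nat (Fclass 5 C \<alpha>)) = 0" .
  qed
qed

theorem mainTheorem7:
  fixes n :: nat
  assumes "n \<ge> 5"
  shows "\<exists>c :: (nat \<Rightarrow> nat) set \<Rightarrow> rat.
           (\<exists>C \<in> tree_classes n. c C \<noteq> 0) \<and>
           (\<forall>\<alpha> :: nat \<Rightarrow> nat. (\<Sum>C \<in> tree_classes n. c C * of_nat (Fclass n C \<alpha>)) = 0)"
  using assms
proof (induction n rule: dec_induct)
  case base show ?case by (rule base5)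
next
  case (step m)
  have "\<exists>c :: (nat \<Rightarrow> nat) set \<Rightarrow> rat.
           (\<exists>C \<in> tree_classes m. c C \<noteq> 0) \<and>
           (\<forall>\<alpha> :: nat \<Rightarrow> nat. (\<Sum>C \<in> tree_classes m. c C * of_nat (Fclass m C \<alpha>)) = 0)"
    using step by blast
  then show ?case by (rule step_lift)
qed

end
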